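(* Let $N\ge 2$, $\xi>0$, and consider the system of $N$ agents in the plane in which each agent interacts (by attraction and repulsion, isotropically) only with its single closest neighbor, i.e. $\dot x=f(x)$ with $f$ as in the context. Let $x^*\in(\mathbb{R}^2)^N\setminus S$. If for all $i\in\{1,\dots,N\}$ and all $k\in\mathcal{N}_i(x^* )$ it holds that $\|x^*_i-x^*_k\|=\xi$, then $x^*$ is a Filippov equilibrium of this system, i.e. $0\in K f(x^* )$, and moreover $1\le|\mathcal{N}_i(x^* )|\le 6$ for all $i\in\{1,\dots,N\}$.
   Context: Configurations are $x=(x_1,\dots,x_N)\in(\mathbb{R}^2)^N$, where $x_i$ is the position of agent $i$, and $\|\cdot\|$ is the Euclidean norm on $\mathbb{R}^2$. The set of degenerate configurations is $S=\{x: \exists\, i\neq j \text{ with } x_i=x_j\}$, and the set of switching configurations is $D=\{x:\exists\, i,j,k \text{ with } j\ne k,\ j,k\neq i,\ \|x_i-x_j\|=\|x_i-x_k\|\}$. For any configuration $x\notin S$, $\mathcal{N}_i(x)=\arg\min_{j\neq i}\|x_i-x_j\|$ is the (possibly multivalued) set of closest neighbors of agent $i$, and $|\mathcal{N}_i(x)|$ its cardinality. For $x\notin D\cup S$, $\mathcal{N}_i(x)=\{c_i(x)\}$ is a singleton and the vector field $f:(\mathbb{R}^2)^N\setminus(D\cup S)\to(\mathbb{R}^2)^N$ is defined componentwise by $$f_i(x)=\big(x_{c_i(x)}-x_i\big)-\xi^2\,\frac{x_{c_i(x)}-x_i}{\|x_{c_i(x)}-x_i\|^2},\qquad i=1,\dots,N.$$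 For $y\in(\mathbb{R}^2)^N$, $K f(y)=\bigcap_{\delta>0}\bigcap_{\mu(\Lambda)=0}\overline{\mathrm{co}}\{f(B(y,\delta)\setminus\Lambda)\}$, where $B(y,\delta)$ is the open Euclidean ball of radius $\delta$ about $y$, $\overline{\mathrm{co}}$ is the closed convex hull, $\mu$ is Lebesgue measure, and the inner intersection ranges over Lebesgue-null sets $\Lambda$ (points where $f$ is undefined are discarded). A configuration $x^*$ is a Filippov equilibrium if $0\in K f(x^* )$. *)

theory Defs
  imports "HOL-Analysis.Analysis"
begin

text \<open>A configuration of N agents in the plane is an element of (real^2)^'n,
  where the finite type 'n indexes the agents (N = CARD('n)).  The norm on
  real^2 is the Euclidean norm.\<close>

type_synonym 'n config = "(real^2)^'n"

definition degenerate :: "'n::finite config \<Rightarrow> bool" where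
  "degenerate x \<longleftrightarrow> (\<exists>i j. i \<noteq> j \<and> x$i = x$j)"

definition switching :: "'n::finite config \<Rightarrow> bool" where
  "switching x \<longleftrightarrow> (\<exists>i j k. j \<noteq> k \<and> j \<noteq> i \<and> k \<noteq> i \<and>
      norm (x$i - x$j) = norm (x$i - x$k))"

definition nbrs :: "'n::finite config \<Rightarrow> 'n \<Rightarrow> 'n set" where
  "nbrs x i = {j. j \<noteq> i \<and> (\<forall>k. k \<noteq> i \<longrightarrow> norm (x$i - x$j) \<le> norm (x$i - x$k))}"

text \<open>The closest neighbour c_i(x) (unique when x is neither switching nor degenerate).\<close>
definition cnb :: "'n::finite config \<Rightarrow> 'n \<Rightarrow> 'n" where
  "cnb x i = (THE j. j \<in> nbrs x i)"

text \<open>The vector field f, meaningful on configurations outside D \<union> S.\<close>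
definition fvec :: "real \<Rightarrow> 'n::finite config \<Rightarrow> 'n config" where
  "fvec \<xi> x = (\<chi> i. (x$(cnb x i) - x$i)
       - (\<xi>^2 / (norm (x$(cnb x i) - x$i))^2) *\<^sub>R (x$(cnb x i) - x$i))"

text \<open>Filippov set-valued map; points in D \<union> S (where f is undefined) are discarded.\<close>
definition filippov :: "real \<Rightarrow> 'n::finite config \<Rightarrow> 'n config set" where
  "filippov \<xi> y = (\<Inter>\<delta>\<in>{\<delta>. \<delta> > 0}. \<Inter>\<Lambda>\<in>null_sets lebesgue.
      closure (convex hull (fvec \<xi> ` (ball y \<delta> - \<Lambda> - {z. degenerate z \<or> switching z}))))"

end

theory Submission
  imports Defs
begin


lemma norm_vec_le_sum: "norm (x::'a::real_normed_vector^'n) \<le> (\<Sum>i\<in>UNIV. norm (x$i))"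
  by (simp add: norm_vec_def L2_set_le_sum)

lemma empty_interior_Union:
  assumes "finite F" "\<And>S. S \<in> F \<Longrightarrow> closed S \<and> interior S = {}"
  shows "interior (\<Union>F) = {}"
  using assms
proof (induction F rule: finite_induct)
  case empty then show ?case by simp
next
  case (insert S F)
  have "interior (\<Union>F \<union> S) = interior (\<Union>F)"
    using insert by (intro interior_closed_Un_empty_interior) auto
  then show ?case using insert by (simp add: Un_commute)
qed

lemma empty_interiorI:
  assumes "\<And>z e. z \<in> A \<Longrightarrow> e > 0 \<Longrightarrow> \<exists>w. dist w z < e \<and> w \<notin> A"
  shows "interior A = {}"
proof (rule ccontr)
  assume "interior A \<noteq> {}"
  then obtain z where "z \<in> interior A" by auto
  then obtain e where e: "e > 0" "ball z e \<subseteq> A" by (auto simp: mem_interior)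
  then have "z \<in> A" by auto
  from assms[OF this e(1)] obtain w where "dist w z < e" "w \<notin> A" by auto
  with e show False by (auto simp: dist_commute subset_iff mem_ball)
qed

definition upd :: "'n::finite config \<Rightarrow> 'n \<Rightarrow> real^2 \<Rightarrow> 'n config" where
  "upd z j v = (\<chi> l. if l = j then z$j + v else z$l)"

lemma upd_dist: "dist (upd z j v) z \<le> norm v"
proof -
  have "dist (upd z j v) z = norm (upd z j v - z)" by (simp add: dist_norm)
  also have "\<dots> \<le> (\<Sum>l\<in>UNIV. norm ((upd z j v - z)$l))" by (rule norm_vec_le_sum)
  also have "(\<Sum>l\<in>UNIV. norm ((upd z j v - z)$l)) = (\<Sum>l\<in>UNIV. if l = j then norm v else 0)"
    by (rule sum.cong) (auto simp: upd_def)
  also have "\<dots> = norm v" by simp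
  finally show ?thesis .
qed

lemma upd_nth: "upd z j v $ l = (if l = j then z$j + v else z$l)"
  by (simp add: upd_def)

lemma closed_eq_set: "closed {z::'n::finite config. z$i = z$j}"
  by (intro closed_Collect_eq continuous_intros)

lemma closed_sw_set: "closed {z::'n::finite config. norm (z$i - z$j) = norm (z$i - z$k)}"
  by (intro closed_Collect_eq continuous_intros)

lemma int_eq_set: assumes "i \<noteq> j" shows "interior {z::'n::finite config. z$i = z$j} = {}"
proof (rule empty_interiorI)
  fix z :: "'n config" and e :: real assume z: "z \<in> {z. z$i = z$j}" and e: "e > 0"
  obtain v :: "real^2" where v: "norm v = e/2" using vector_choose_size[of "e/2"] e by auto
  have "dist (upd z j v) z < e" using upd_dist[of z j v] v e by simp
  moreover have "v \<noteq> 0" using v e by auto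
  then have "upd z j v \<notin> {z. z$i = z$j}" using z assms by (simp add: upd_nth)
  ultimately show "\<exists>w. dist w z < e \<and> w \<notin> {z. z$i = z$j}" by blast
qed

lemma int_sw_set: assumes "j \<noteq> i" "k \<noteq> i" "j \<noteq> k"
  shows "interior {z::'n::finite config. norm (z$i - z$j) = norm (z$i - z$k)} = {}"
proof (rule empty_interiorI)
  fix z :: "'n config" and e :: real
  assume z: "z \<in> {z. norm (z$i - z$j) = norm (z$i - z$k)}" and e: "e > 0"
  have "\<exists>v. norm v < e \<and> norm (z$i - (z$j + v)) \<noteq> norm (z$i - z$j)"
  proof (cases "z$i = z$j")
    case True
    obtain v :: "real^2" where v: "norm v = e/2" using vector_choose_size[of "e/2"] e by auto
    then show ?thesis using True e by (intro exI[of _ v]) auto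
  next
    case False
    define d where "d = norm (z$j - z$i)"
    have d: "d > 0" using False by (simp add: d_def)
    define s where "s = e / (2*d)"
    have s: "s > 0" using d e by (simp add: s_def)
    define v where "v = s *\<^sub>R (z$j - z$i)"
    have "norm v = s * d" using s by (simp add: v_def d_def)
    also have "\<dots> = e/2" using d by (simp add: s_def)
    finally have nv: "norm v < e" using e by simp
    have "z$i - (z$j + v) = - ((1 + s) *\<^sub>R (z$j - z$i))" by (simp add: v_def algebra_simps)
    then have "norm (z$i - (z$j + v)) = (1+s) * d" using s by (simp add: d_def)
    moreover have "norm (z$i - z$j) = d" by (simp add: d_def norm_minus_commute)
    ultimately show ?thesis using nv s d by (intro exI[of _ v]) auto
  qed
  then obtain v where v: "norm v < e" "norm (z$i - (z$j + v)) \<noteq> norm (z$i - z$j)" by blast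
  have "dist (upd z j v) z < e" using upd_dist[of z j v] v by simp
  moreover have "upd z j v \<notin> {z. norm (z$i - z$j) = norm (z$i - z$k)}"
    using z assms v by (simp add: upd_nth)
  ultimately show "\<exists>w. dist w z < e \<and> w \<notin> {z. norm (z$i - z$j) = norm (z$i - z$k)}" by blast
qed

lemma bad_props:
  "closed {z::'n::finite config. degenerate z \<or> switching z} \<and> interior {z::'n::finite config. degenerate z \<or> switching z} = {}"
proof -
  define F where "F = (\<lambda>(i,j). {z::'n config. z$i = z$j}) ` {(i,j). i \<noteq> j}
     \<union> (\<lambda>(i,j,k). {z::'n config. norm (z$i - z$j) = norm (z$i - z$k)}) ` {(i,j,k). j \<noteq> k \<and> j \<noteq> i \<and> k \<noteq> i}"
  have eq: "{z::'n config. degenerate z \<or> switching z} = \<Union>F"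
    unfolding F_def degenerate_def switching_def by fastforce
  have fin: "finite F" unfolding F_def by simp
  have cl: "\<And>S. S \<in> F \<Longrightarrow> closed S \<and> interior S = {}"
    unfolding F_def using closed_eq_set closed_sw_set int_eq_set int_sw_set by fastforce
  show ?thesis unfolding eq using empty_interior_Union[OF fin cl] closed_Union[OF fin] cl by blast
qed



lemma nbrs_nonempty:
  assumes "CARD('n::finite) \<ge> 2"
  shows "nbrs (z::'n config) i \<noteq> {}"
proof -
  have "\<exists>j::'n. j \<noteq> i"
  proof (rule ccontr)
    assume "\<not> (\<exists>j::'n. j \<noteq> i)"
    then have "(UNIV::'n set) = {i}" by auto
    then have "card (UNIV::'n set) = card {i}" by (rule arg_cong)
    then have "card (UNIV::'n set) = 1" by simp
    then show False using assms by simp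
  qed
  then have ne: "{j. j \<noteq> i} \<noteq> {}" by auto
  have fin: "finite {j::'n. j \<noteq> i}" by simp
  define m where "m = Min ((\<lambda>j. norm (z$i - z$j)) ` {j. j \<noteq> i})"
  have "m \<in> (\<lambda>j. norm (z$i - z$j)) ` {j. j \<noteq> i}" unfolding m_def
    using fin ne by (intro Min_in) auto
  then obtain j where j1: "j \<in> {j. j \<noteq> i}" and jm: "m = norm (z$i - z$j)" by blast
  have j2: "norm (z$i - z$j) \<le> norm (z$i - z$k)" if "k \<in> {j. j \<noteq> i}" for k
    unfolding jm[symmetric] m_def using fin that by (intro Min_le) auto
  note j = j1 j2
  then have "j \<in> nbrs z i" unfolding nbrs_def by auto
  then show ?thesis by auto
qed

lemma nbr_dist_ge:
  assumes "j \<in> nbrs z i" "k \<noteq> i" shows "norm (z$i - z$j) \<le> norm (z$i - z$k)"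
  using assms unfolding nbrs_def by auto

lemma cnb_in:
  assumes "CARD('n::finite) \<ge> 2" "\<not> switching (z::'n config)"
  shows "cnb z i \<in> nbrs z i"
proof -
  obtain j where j: "j \<in> nbrs z i" using nbrs_nonempty[OF assms(1)] by auto
  have "\<And>k. k \<in> nbrs z i \<Longrightarrow> k = j"
  proof (rule ccontr)
    fix k assume k: "k \<in> nbrs z i" "k \<noteq> j"
    have "k \<noteq> i" "j \<noteq> i" using j k by (auto simp: nbrs_def)
    then have "norm (z$i - z$j) \<le> norm (z$i - z$k)" "norm (z$i - z$k) \<le> norm (z$i - z$j)"
      using nbr_dist_ge[OF j \<open>k \<noteq> i\<close>] nbr_dist_ge[OF k(1) \<open>j \<noteq> i\<close>] by auto
    then have "norm (z$i - z$j) = norm (z$i - z$k)" by linarith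
    then have "switching z" unfolding switching_def using \<open>k \<noteq> i\<close> \<open>j \<noteq> i\<close> k(2)
      by (intro exI[of _ i] exI[of _ j] exI[of _ k]) auto
    then show False using assms(2) by simp
  qed
  then have "cnb z i = j" unfolding cnb_def using j by (intro the_equality) blast+
  then show ?thesis using j by simp
qed

lemma aux_bound:
  fixes m \<xi> :: real
  assumes "\<xi> > 0" "\<bar>m - \<xi>\<bar> \<le> \<xi>/2"
  shows "\<bar>1 - \<xi>^2/m^2\<bar> * m \<le> 3 * \<bar>m - \<xi>\<bar>"
proof -
  have m: "m \<ge> \<xi>/2" using assms by linarith
  then have mp: "m > 0" using assms(1) by linarith
  have eq: "(1 - \<xi>^2/m^2) * m = (m - \<xi>) * ((m + \<xi>)/m)"
  proof -
    have "(1 - \<xi>^2/m^2) * m = m - \<xi>^2/m^2 * m" by (simp add: left_diff_distrib)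
    also have "\<xi>^2/m^2 * m = \<xi>^2/m" using mp by (simp add: power2_eq_square)
    also have "m - \<xi>^2/m = (m*m - \<xi>^2)/m" using mp by (simp add: diff_divide_distrib)
    also have "m*m - \<xi>^2 = (m - \<xi>) * (m + \<xi>)" by (simp add: power2_eq_square algebra_simps)
    also have "(m - \<xi>) * (m + \<xi>) / m = (m - \<xi>) * ((m + \<xi>)/m)" by simp
    finally show ?thesis .
  qed
  have "\<bar>1 - \<xi>^2/m^2\<bar> * m = \<bar>(1 - \<xi>^2/m^2) * m\<bar>" using mp by (simp add: abs_mult)
  also have "\<dots> = \<bar>m - \<xi>\<bar> * ((m + \<xi>)/m)" unfolding eq using mp assms(1) by (simp add: abs_mult)
  also have "\<dots> \<le> \<bar>m - \<xi>\<bar> * 3"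
  proof (rule mult_left_mono)
    have "m + \<xi> \<le> 3 * m" using m by linarith
    then show "(m + \<xi>)/m \<le> 3" using mp by (simp add: divide_le_eq)
  qed simp
  finally show ?thesis by simp
qed

lemma fvec_comp_bound:
  assumes "\<xi> > 0" "\<bar>m - \<xi>\<bar> \<le> \<xi>/2" "norm (v::real^2) = m"
  shows "norm (v - (\<xi>^2 / (norm v)^2) *\<^sub>R v) \<le> 3 * \<bar>m - \<xi>\<bar>"
proof -
  have "v - (\<xi>^2 / (norm v)^2) *\<^sub>R v = (1 - \<xi>^2/m^2) *\<^sub>R v"
    using assms(3) by (simp add: scaleR_diff_left)
  then have "norm (v - (\<xi>^2 / (norm v)^2) *\<^sub>R v) = \<bar>1 - \<xi>^2/m^2\<bar> * m" using assms(3) by simp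
  also have "\<dots> \<le> 3 * \<bar>m - \<xi>\<bar>" by (rule aux_bound[OF assms(1,2)])
  finally show ?thesis .
qed

lemma comp_dist: "\<bar>norm (z$i - z$j) - norm (x$i - x$j)\<bar> \<le> 2 * dist z (x::'n::finite config)"
proof -
  have a: "norm (z$i - x$i) \<le> dist z x" "norm (z$j - x$j) \<le> dist z x"
    using Finite_Cartesian_Product.norm_nth_le[of "z - x"] by (auto simp: dist_norm)
  have e1: "z$i - z$j = (x$i - x$j) + ((z$i - x$i) - (z$j - x$j))" by (simp add: algebra_simps)
  have e2: "x$i - x$j = (z$i - z$j) - ((z$i - x$i) - (z$j - x$j))" by (simp add: algebra_simps)
  have t: "norm ((z$i - x$i) - (z$j - x$j)) \<le> norm (z$i - x$i) + norm (z$j - x$j)"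
    by (rule norm_triangle_ineq4)
  have "norm (z$i - z$j) \<le> norm (x$i - x$j) + norm ((z$i - x$i) - (z$j - x$j))"
    by (subst e1) (rule norm_triangle_ineq)
  moreover have "norm (x$i - x$j) \<le> norm (z$i - z$j) + norm ((z$i - x$i) - (z$j - x$j))"
    by (subst e2) (rule norm_triangle_ineq4)
  moreover note t
  ultimately show ?thesis using a by linarith
qed



lemma small_f:
  fixes x z :: "'n::finite config"
  assumes card: "CARD('n) \<ge> 2" and xi: "\<xi> > 0"
    and hyp: "\<forall>i. \<forall>k \<in> nbrs x i. norm (x$i - x$k) = \<xi>"
    and sw: "\<not> switching z" and eta: "dist z x \<le> \<xi>/4"
  shows "norm (fvec \<xi> z) \<le> real CARD('n) * (6 * dist z x)"
proof -
  have comp: "norm (fvec \<xi> z $ i) \<le> 6 * dist z x" for i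
  proof -
    define c where "c = cnb z i"
    have c: "c \<in> nbrs z i" using cnb_in[OF card sw] by (simp add: c_def)
    then have ci: "c \<noteq> i" by (simp add: nbrs_def)
    obtain c0 where c0: "c0 \<in> nbrs x i" using nbrs_nonempty[OF card] by blast
    then have c0i: "c0 \<noteq> i" by (simp add: nbrs_def)
    have xc0: "norm (x$i - x$c0) = \<xi>" using hyp c0 by blast
    have low: "\<xi> \<le> norm (x$i - x$k)" if "k \<noteq> i" for k
      using nbr_dist_ge[OF c0 that] xc0 by simp
    define m where "m = norm (z$i - z$c)"
    have "m \<ge> \<xi> - 2 * dist z x" using low[OF ci] comp_dist[of z i c x] unfolding m_def by linarith
    moreover have "m \<le> \<xi> + 2 * dist z x"
      using nbr_dist_ge[OF c c0i] comp_dist[of z i c0 x] xc0 unfolding m_def by linarith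
    ultimately have mb: "\<bar>m - \<xi>\<bar> \<le> 2 * dist z x" by linarith
    have nv: "norm (z$c - z$i) = m" by (simp add: m_def norm_minus_commute)
    have "fvec \<xi> z $ i = (z$c - z$i) - (\<xi>^2 / (norm (z$c - z$i))^2) *\<^sub>R (z$c - z$i)"
      by (simp add: fvec_def c_def)
    also have "norm \<dots> \<le> 3 * \<bar>m - \<xi>\<bar>"
      by (rule fvec_comp_bound[OF xi _ nv]) (use mb eta in linarith)
    also have "3 * \<bar>m - \<xi>\<bar> \<le> 3 * (2 * dist z x)" using mb by (intro mult_left_mono) auto
    finally show ?thesis by simp
  qed
  have "norm (fvec \<xi> z) \<le> (\<Sum>i\<in>UNIV. norm (fvec \<xi> z $ i))" by (rule norm_vec_le_sum)
  also have "\<dots> \<le> (\<Sum>i\<in>(UNIV::'n set). 6 * dist z x)" by (rule sum_mono) (rule comp)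
  also have "\<dots> = real CARD('n) * (6 * dist z x)" by simp
  finally show ?thesis .
qed

lemma zero_in_filippov:
  fixes x :: "'n::finite config"
  assumes card: "CARD('n) \<ge> 2" and xi: "\<xi> > 0"
    and hyp: "\<forall>i. \<forall>k \<in> nbrs x i. norm (x$i - x$k) = \<xi>"
  shows "0 \<in> filippov \<xi> x"
  unfolding filippov_def
proof (intro InterI, clarify)
  fix \<delta> :: real and \<Lambda> :: "'n config set" assume d: "\<delta> > 0" and L: "\<Lambda> \<in> null_sets lebesgue"
  define Bad where "Bad = {z::'n config. degenerate z \<or> switching z}"
  have Bc: "closed Bad" and Bi: "interior Bad = {}" using bad_props unfolding Bad_def by auto
  define F where "F = fvec \<xi> ` (ball x \<delta> - \<Lambda> - Bad)"
  have "0 \<in> closure F"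
    unfolding closure_approachable
  proof (intro allI impI)
    fix e :: real assume e: "e > 0"
    define r where "r = min \<delta> (min (\<xi>/4) (e / (6 * real CARD('n) + 1)))"
    have r: "r > 0" using d xi e by (simp add: r_def)
    define U where "U = ball x r - Bad"
    have Uo: "open U" using Bc by (simp add: U_def open_Diff)
    have Une: "U \<noteq> {}"
    proof
      assume "U = {}"
      then have "ball x r \<subseteq> Bad" by (auto simp: U_def)
      then have "x \<in> interior Bad" using r by (auto simp: mem_interior)
      then show False using Bi by simp
    qed
    have "\<not> U \<subseteq> \<Lambda>"
    proof
      assume "U \<subseteq> \<Lambda>"
      then have "negligible U" using L negligible_iff_null_sets negligible_subset by blast
      then show False using open_not_negligible[OF Uo Une] by simp
    qed
    then obtain z where z: "z \<in> U" "z \<notin> \<Lambda>" by blast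
    have dz: "dist z x < r" using z by (simp add: U_def dist_commute)
    have zb: "\<not> switching z" using z by (simp add: U_def Bad_def)
    have "norm (fvec \<xi> z) \<le> real CARD('n) * (6 * dist z x)"
      by (rule small_f[OF card xi hyp zb]) (use dz r_def in linarith)
    also have "\<dots> \<le> real CARD('n) * (6 * r)" using dz by simp
    also have "\<dots> < e"
    proof -
      have "r \<le> e / (6 * real CARD('n) + 1)" by (simp add: r_def)
      then have "(6 * real CARD('n) + 1) * r \<le> e" by (simp add: field_simps)
      then show ?thesis using r by (simp add: algebra_simps)
    qed
    finally have "norm (fvec \<xi> z) < e" .
    moreover have "fvec \<xi> z \<in> F" using z r_def unfolding F_def U_def Bad_def by auto
    ultimately show "\<exists>y\<in>F. dist y 0 < e" by auto
  qed
  moreover have "closure F \<subseteq> closure (convex hull F)" by (intro closure_mono hull_subset)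
  ultimately show "0 \<in> closure (convex hull (fvec \<xi> ` (ball x \<delta> - \<Lambda> - {z. degenerate z \<or> switching z})))"
    unfolding F_def Bad_def by blast
qed



lemma norm2_sq: "(norm (v::real^2))^2 = (v$1)^2 + (v$2)^2"
  by (simp add: norm_vec_def L2_set_def sum_2)

lemma polar2:
  assumes "norm (v::real^2) = r"
  shows "v$1 = r * cos (Arg (Complex (v$1) (v$2))) \<and> v$2 = r * sin (Arg (Complex (v$1) (v$2)))"
proof -
  define w where "w = Complex (v$1) (v$2)"
  have cw: "cmod w = r" using assms norm2_sq[of v]
    by (simp add: w_def complex_norm) (metis norm_ge_zero real_sqrt_abs real_sqrt_unique)
  have "rcis (cmod w) (Arg w) = w" by (rule rcis_cmod_Arg)
  then have "Re w = cmod w * cos (Arg w)" "Im w = cmod w * sin (Arg w)"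
    by (metis Re_rcis, metis Im_rcis)
  then show ?thesis using cw by (simp add: w_def)
qed

lemma dist_polar:
  fixes r a b :: real
  shows "(r * cos a - r * cos b)^2 + (r * sin a - r * sin b)^2 = r^2 * (2 - 2 * cos (a - b))"
proof -
  have sa: "(sin a)^2 + (cos a)^2 = 1" and sb: "(sin b)^2 + (cos b)^2 = 1" by simp_all
  have "(r * cos a - r * cos b)^2 + (r * sin a - r * sin b)^2
     = r^2 * ((sin a)^2 + (cos a)^2) + r^2 * ((sin b)^2 + (cos b)^2) - 2 * r^2 * (cos a * cos b + sin a * sin b)"
    by algebra
  also have "\<dots> = r^2 * (2 - 2 * cos (a - b))" unfolding sa sb cos_diff by algebra
  finally show ?thesis .
qed

lemma at_most_six:
  fixes P :: "'a set" and p :: "'a \<Rightarrow> real^2"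
  assumes xi: "\<xi> > 0" and on: "\<forall>k\<in>P. norm (p k) = \<xi>"
    and sep: "\<forall>k\<in>P. \<forall>l\<in>P. k \<noteq> l \<longrightarrow> \<xi> \<le> norm (p k - p l)"
  shows "card P \<le> 6"
proof -
  define a where "a k = Arg (Complex (p k $ 1) (p k $ 2))" for k
  define t where "t k = (a k + pi) * 3 / pi" for k
  define \<sigma> where "\<sigma> k = ceiling (t k)" for k
  have range: "\<sigma> k \<in> {1..6}" for k
  proof -
    have "-pi < a k" "a k \<le> pi" using Arg_bounded by (auto simp: a_def)
    then have "0 < t k" "t k \<le> 6" by (auto simp: t_def field_simps)
    then show ?thesis unfolding \<sigma>_def by (auto simp: ceiling_le_iff less_ceiling_iff)
  qed
  have inj: "inj_on \<sigma> P"
  proof (rule inj_onI, rule ccontr)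
    fix k l assume k: "k \<in> P" and l: "l \<in> P" and eq: "\<sigma> k = \<sigma> l" and ne: "k \<noteq> l"
    have "of_int (\<sigma> k) - 1 < t k \<and> t k \<le> of_int (\<sigma> k)" unfolding \<sigma>_def by (rule ceiling_correct)
    moreover have "of_int (\<sigma> k) - 1 < t l \<and> t l \<le> of_int (\<sigma> k)" unfolding eq unfolding \<sigma>_def by (rule ceiling_correct)
    ultimately have "\<bar>t k - t l\<bar> < 1" by linarith
    moreover have "a k - a l = (t k - t l) * (pi/3)" by (simp add: t_def field_simps)
    moreover have p3: "\<bar>pi/3\<bar> = pi/3" using pi_gt_zero by simp
    ultimately have e: "\<bar>a k - a l\<bar> = \<bar>t k - t l\<bar> * (pi/3)" by (simp only: abs_mult)
    have "\<bar>t k - t l\<bar> * (pi/3) < 1 * (pi/3)" using \<open>\<bar>t k - t l\<bar> < 1\<close> by (intro mult_strict_right_mono) auto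
    then have d: "\<bar>a k - a l\<bar> < pi/3" using e by simp
    have "cos (pi/3) < cos \<bar>a k - a l\<bar>"
    proof -
      have "\<bar>a k - a l\<bar> \<le> pi" using d pi_gt_zero by linarith
      then have "cos (pi/3) < cos \<bar>a k - a l\<bar> \<longleftrightarrow> \<bar>a k - a l\<bar> < pi/3"
        using pi_gt_zero by (intro cos_mono_less_eq) auto
      then show ?thesis using d by blast
    qed
    then have c: "cos (a k - a l) > 1/2" by (simp add: cos_60)
    have pk: "p k $ 1 = \<xi> * cos (a k) \<and> p k $ 2 = \<xi> * sin (a k)"
      using polar2[of "p k" \<xi>] on k by (simp add: a_def)
    have pl: "p l $ 1 = \<xi> * cos (a l) \<and> p l $ 2 = \<xi> * sin (a l)"
      using polar2[of "p l" \<xi>] on l by (simp add: a_def)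
    have "(norm (p k - p l))^2 = \<xi>^2 * (2 - 2 * cos (a k - a l))"
      using norm2_sq[of "p k - p l"] pk pl dist_polar[of \<xi> "a k" "a l"] by simp
    also have "\<dots> < \<xi>^2 * 1" using c xi by (intro mult_strict_left_mono) auto
    finally have "(norm (p k - p l))^2 < \<xi>^2" by simp
    moreover have "\<xi>^2 \<le> (norm (p k - p l))^2" using sep k l ne xi by (intro power_mono) auto
    ultimately show False by simp
  qed
  have "card P \<le> card {1..6::int}"
    by (rule card_inj_on_le[OF inj]) (use range in auto)
  then show ?thesis by simp
qed


theorem mainTheorem2:
  fixes x :: "(real^2)^'n::finite" and \<xi> :: real
  assumes "CARD('n) \<ge> 2"
    and "\<xi> > 0"
    and "\<not> degenerate x"
    and "\<forall>i. \<forall>k \<in> nbrs x i. norm (x$i - x$k) = \<xi>"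
  shows "0 \<in> filippov \<xi> x \<and> (\<forall>i. 1 \<le> card (nbrs x i) \<and> card (nbrs x i) \<le> 6)"
proof
  show "0 \<in> filippov \<xi> x" using zero_in_filippov assms by blast
  show "\<forall>i. 1 \<le> card (nbrs x i) \<and> card (nbrs x i) \<le> 6"
  proof
    fix i
    have "nbrs x i \<noteq> {}" using nbrs_nonempty[OF assms(1)] by blast
    then have "1 \<le> card (nbrs x i)" by (simp add: Suc_le_eq card_gt_0_iff)
    moreover have "card (nbrs x i) \<le> 6"
    proof (rule at_most_six[where p = "\<lambda>k. x$k - x$i", OF assms(2)])
      show "\<forall>k\<in>nbrs x i. norm (x$k - x$i) = \<xi>"
        using assms(4) by (metis norm_minus_commute)
      show "\<forall>k\<in>nbrs x i. \<forall>l\<in>nbrs x i. k \<noteq> l \<longrightarrow> \<xi> \<le> norm ((x$k - x$i) - (x$l - x$i))"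
      proof (intro ballI impI)
        fix k l assume k: "k \<in> nbrs x i" and l: "l \<in> nbrs x i" and kl: "k \<noteq> l"
        obtain c where c: "c \<in> nbrs x k" using nbrs_nonempty[OF assms(1)] by blast
        have "norm (x$k - x$c) = \<xi>" using assms(4) c by blast
        moreover have "norm (x$k - x$c) \<le> norm (x$k - x$l)" using nbr_dist_ge[OF c] kl by auto
        ultimately show "\<xi> \<le> norm ((x$k - x$i) - (x$l - x$i))" by simp
      qed
    qed
    ultimately show "1 \<le> card (nbrs x i) \<and> card (nbrs x i) \<le> 6" by simp
  qed
qed

end
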